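(* Let $(X,\|\cdot\|)$ be a Banach space and $(M,d)$ a metric space. Assume there exist increasing functions $\rho,\omega:[0,\infty)\to[0,\infty)$ tending to $\infty$ at $\infty$, a point $m_0\in M$, and for every $n\in\mathbb{N}$ a map $h_n:nB_X\to M$ with $h_n(0)=m_0$ and $\rho(\|x-y\|)\le d(h_n(x),h_n(y))\le\omega(\|x-y\|)$ for all $x,y\in nB_X$. Equip $M^4$ with the metric $d((a_i),(b_i))=\max_{1\le i\le4}d(a_i,b_i)$. Then there is a map $F:X\to M^4$ such that $\tilde\rho(\|x-y\|)\le d(F(x),F(y))\le\tilde\omega(\|x-y\|)$ for all $x,y\in X$, where $\tilde\rho(t)=\frac12\rho(t/2)$ and $\tilde\omega(t)=8\omega(3t)$.
   Context: $B_X$ denotes the closed unit ball of $X$, and $nB_X=\{x\in X:\|x\|\le n\}$. *)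

theory Defs
  imports "HOL-Analysis.Analysis"
begin

definition dist4 :: "('m::metric_space \<times> 'm \<times> 'm \<times> 'm) \<Rightarrow> ('m \<times> 'm \<times> 'm \<times> 'm) \<Rightarrow> real" where
  "dist4 p q = (case p of (a1, a2, a3, a4) \<Rightarrow> case q of (b1, b2, b3, b4) \<Rightarrow>
      max (max (dist a1 b1) (dist a2 b2)) (max (dist a3 b3) (dist a4 b4)))"

end

theory Submission
  imports Defs
begin

definition fk :: "real \<Rightarrow> real \<Rightarrow> real \<Rightarrow> real" where
  "fk a c r = max 0 (min (r - a) (c - r))"

definition Tm :: "real \<Rightarrow> real \<Rightarrow> 'a::real_normed_vector \<Rightarrow> 'a" where
  "Tm a c x = (if x = 0 then 0 else (fk a c (norm x) / norm x) *\<^sub>R x)"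

lemma fk_nonneg: "0 \<le> fk a c r" by (simp add: fk_def)

lemma fk_le_r: "0 \<le> a \<Longrightarrow> 0 \<le> r \<Longrightarrow> fk a c r \<le> r"
  by (simp add: fk_def)

lemma fk_le_c: "0 \<le> c \<Longrightarrow> fk a c r \<le> c + 0 * r \<or> r < 0"
  by (auto simp: fk_def)

lemma fk_lip: "\<bar>fk a c r - fk a c s\<bar> \<le> \<bar>r - s\<bar>"
  unfolding fk_def by (auto simp: max_def min_def abs_if split: if_splits)

lemma norm_Tm: "0 \<le> a \<Longrightarrow> norm (Tm a c x) = fk a c (norm x)"
  by (auto simp: Tm_def fk_def)

lemma Tm_0 [simp]: "Tm a c 0 = 0" by (simp add: Tm_def)

lemma unit_diff:
  fixes x y :: "'a::real_normed_vector"
  assumes "y \<noteq> 0" "norm y \<le> norm x"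
  shows "norm ((1/norm x) *\<^sub>R x - (1/norm y) *\<^sub>R y) \<le> 2 * norm (x - y) / norm x"
proof -
  have ny: "norm y > 0" using assms by simp
  have nx: "norm x > 0" using assms ny by linarith
  have eq: "(1/norm x) *\<^sub>R x - (1/norm y) *\<^sub>R y = (1/norm x) *\<^sub>R (x - y) + (1/norm x - 1/norm y) *\<^sub>R y"
    by (simp add: algebra_simps)
  have "norm ((1/norm x) *\<^sub>R (x - y) + (1/norm x - 1/norm y) *\<^sub>R y)
      \<le> norm ((1/norm x) *\<^sub>R (x - y)) + norm ((1/norm x - 1/norm y) *\<^sub>R y)"
    by (rule norm_triangle_ineq)
  also have "norm ((1/norm x) *\<^sub>R (x - y)) = norm (x - y) / norm x" using nx by simp
  also have "norm ((1/norm x - 1/norm y) *\<^sub>R y) = (norm x - norm y) / norm x"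
  proof -
    have "1/norm x \<le> 1/norm y" using ny assms(2) by (simp add: frac_le)
    then have "norm ((1/norm x - 1/norm y) *\<^sub>R y) = (1/norm y - 1/norm x) * norm y" by simp
    also have "\<dots> = (norm x - norm y) / norm x" using nx ny by (simp add: field_simps)
    finally show ?thesis .
  qed
  also have "(norm x - norm y) / norm x \<le> norm (x - y) / norm x"
    using nx norm_triangle_ineq2[of x y] by (simp add: divide_right_mono)
  finally show ?thesis using eq by (simp add: add_divide_distrib[symmetric])
qed

lemma Tm_lip_aux:
  fixes x y :: "'a::real_normed_vector"
  assumes a: "0 \<le> a" and le: "norm y \<le> norm x"
  shows "norm (Tm a c x - Tm a c y) \<le> 3 * norm (x - y)"
proof (cases "y = 0")
  case True
  then show ?thesis proof -
    have "fk a c (norm x) \<le> norm x" using fk_le_r[OF a, of "norm x"] by simp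
    moreover have "0 \<le> norm x" by simp
    moreover have "norm (Tm a c x - Tm a c y) = fk a c (norm x)" using norm_Tm[OF a, of c x] True by simp
    moreover have "norm (x - y) = norm x" using True by simp
    ultimately show ?thesis by linarith
  qed
next
  case False
  have ny: "norm y > 0" using False by simp
  have nx: "norm x > 0" using ny le by linarith
  hence x0: "x \<noteq> 0" by auto
  define R where "R = norm x"
  define s where "s = norm y"
  define fR where "fR = fk a c R"
  define fs where "fs = fk a c s"
  have eq: "Tm a c x - Tm a c y = ((fR - fs)/R) *\<^sub>R x + fs *\<^sub>R ((1/R) *\<^sub>R x - (1/s) *\<^sub>R y)"
    using x0 False unfolding Tm_def R_def s_def fR_def fs_def
    by (simp add: algebra_simps diff_divide_distrib)
  have "norm (Tm a c x - Tm a c y) \<le> norm (((fR - fs)/R) *\<^sub>R x) + norm (fs *\<^sub>R ((1/R) *\<^sub>R x - (1/s) *\<^sub>R y))"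
    unfolding eq by (rule norm_triangle_ineq)
  also have "norm (((fR - fs)/R) *\<^sub>R x) = \<bar>fR - fs\<bar>"
    using nx by (simp add: R_def)
  also have "\<bar>fR - fs\<bar> \<le> norm (x - y)"
    using fk_lip[of a c R s] norm_triangle_ineq3[of x y] unfolding fR_def fs_def R_def s_def by linarith
  also have "norm (fs *\<^sub>R ((1/R) *\<^sub>R x - (1/s) *\<^sub>R y)) = fs * norm ((1/R) *\<^sub>R x - (1/s) *\<^sub>R y)"
    using fk_nonneg[of a c s] by (simp add: fs_def)
  also have "\<dots> \<le> fs * (2 * norm (x - y) / R)"
    using mult_left_mono[OF unit_diff[OF False le] fk_nonneg[of a c s]] unfolding R_def s_def fs_def
    by simp
  also have "\<dots> \<le> 2 * norm (x - y)"
  proof -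
    have "fs \<le> R" using fk_le_r[OF a, of s c] le ny unfolding fs_def s_def R_def by linarith
    hence "fs * (2 * norm (x - y) / R) \<le> R * (2 * norm (x - y) / R)"
      by (rule mult_right_mono) (simp add: R_def)
    also have "\<dots> = 2 * norm (x - y)" using nx by (simp add: R_def)
    finally show ?thesis .
  qed
  finally show ?thesis by simp
qed

lemma Tm_lip:
  fixes x y :: "'a::real_normed_vector"
  assumes a: "0 \<le> a"
  shows "norm (Tm a c x - Tm a c y) \<le> 3 * norm (x - y)"
proof (cases "norm y \<le> norm x")
  case True then show ?thesis by (rule Tm_lip_aux[OF a])
next
  case False
  then have "norm (Tm a c y - Tm a c x) \<le> 3 * norm (y - x)" by (intro Tm_lip_aux[OF a]) simp
  then show ?thesis by (simp add: norm_minus_commute)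
qed

lemma Tm_lower:
  fixes x y :: "'a::real_normed_vector"
  assumes a: "0 \<le> a" and R1: "4 * a \<le> norm x" and R2: "norm x \<le> (a + c)/2"
    and le: "norm y \<le> norm x"
  shows "norm (x - y) / 2 \<le> norm (Tm a c x - Tm a c y)"
proof (cases "norm y \<le> a")
  case True
  have "fk a c (norm y) = 0" using True by (simp add: fk_def)
  hence ty: "Tm a c y = 0" by (simp add: Tm_def)
  have "fk a c (norm x) = norm x - a" using R1 R2 a by (simp add: fk_def)
  hence "norm (Tm a c x) = norm x - a" using norm_Tm[OF a, of c x] by simp
  moreover have "norm (x - y) \<le> norm x + norm y" by (rule norm_triangle_ineq4)
  ultimately show ?thesis using ty True R1 a by simp
next
  case False
  have ny: "norm y > 0" using False a by linarith
  hence y0: "y \<noteq> 0" by auto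
  have nx: "norm x > 0" using ny le by linarith
  hence x0: "x \<noteq> 0" by auto
  have fx: "fk a c (norm x) = norm x - a" using R1 R2 a by (simp add: fk_def)
  have fy: "fk a c (norm y) = norm y - a" using False le R2 by (simp add: fk_def)
  have eq: "Tm a c x - Tm a c y = (x - y) - a *\<^sub>R ((1/norm x) *\<^sub>R x - (1/norm y) *\<^sub>R y)"
    using x0 y0 nx ny unfolding Tm_def fx fy by (simp add: algebra_simps diff_divide_distrib)
  have "norm (x - y) - norm (a *\<^sub>R ((1/norm x) *\<^sub>R x - (1/norm y) *\<^sub>R y)) \<le> norm (Tm a c x - Tm a c y)"
    unfolding eq by (rule norm_triangle_ineq2)
  moreover have "norm (a *\<^sub>R ((1/norm x) *\<^sub>R x - (1/norm y) *\<^sub>R y)) \<le> a * (2 * norm (x - y) / norm x)"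
    using mult_left_mono[OF unit_diff[OF y0 le] a] a by simp
  moreover have "a * (2 * norm (x - y) / norm x) \<le> norm (x - y) / 2"
  proof -
    have "a * (2 * norm (x - y) / norm x) = (2 * a) * norm (x - y) / norm x" by simp
    also have "\<dots> \<le> (norm x / 2) * norm (x - y) / norm x"
      using R1 nx by (intro divide_right_mono mult_right_mono) auto
    also have "\<dots> = norm (x - y) / 2" using nx by simp
    finally show ?thesis .
  qed
  ultimately show ?thesis by linarith
qed


theorem theorem4p4:
  fixes \<rho> \<omega> :: "real \<Rightarrow> real"
    and m0 :: "'m::metric_space"
    and h :: "nat \<Rightarrow> 'a::banach \<Rightarrow> 'm"
  assumes rho_nonneg: "\<forall>t\<ge>0. \<rho> t \<ge> 0"
    and omega_nonneg: "\<forall>t\<ge>0. \<omega> t \<ge> 0"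
    and rho_mono: "mono_on {0..} \<rho>"
    and omega_mono: "mono_on {0..} \<omega>"
    and rho_infty: "filterlim \<rho> at_top at_top"
    and omega_infty: "filterlim \<omega> at_top at_top"
    and h0: "\<forall>n\<ge>1. h n 0 = m0"
    and hbounds: "\<forall>n\<ge>1. \<forall>x y. norm x \<le> real n \<and> norm y \<le> real n \<longrightarrow>
        \<rho> (norm (x - y)) \<le> dist (h n x) (h n y) \<and> dist (h n x) (h n y) \<le> \<omega> (norm (x - y))"
  shows "\<exists>F :: 'a \<Rightarrow> 'm \<times> 'm \<times> 'm \<times> 'm. \<forall>x y.
        (1/2) * \<rho> (norm (x - y) / 2) \<le> dist4 (F x) (F y) \<and>
        dist4 (F x) (F y) \<le> 8 * \<omega> (3 * norm (x - y))"
proof -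
  have rmono: "\<rho> u \<le> \<rho> v" if "0 \<le> u" "u \<le> v" for u v
    using rho_mono that by (auto intro: mono_onD)
  have omono: "\<omega> u \<le> \<omega> v" if "0 \<le> u" "u \<le> v" for u v
    using omega_mono that by (auto intro: mono_onD)
  have rho0: "\<rho> 0 \<le> 0"
    using hbounds by (metis dist_self diff_self norm_zero of_nat_1 order_refl zero_le_one)
  have gex: "\<exists>r. 0 \<le> r \<and> 2 * \<omega> (8 * v) \<le> \<rho> (3 * r)" for v
  proof -
    have "eventually (\<lambda>x. 2 * \<omega> (8 * v) \<le> \<rho> x) at_top"
      using rho_infty by (simp add: filterlim_at_top)
    then obtain N where N: "\<And>x. x \<ge> N \<Longrightarrow> 2 * \<omega> (8 * v) \<le> \<rho> x"
      by (auto simp: eventually_at_top_linorder)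
    show ?thesis by (rule exI[of _ "max 0 N"]) (auto intro!: N)
  qed
  define g where "g = (\<lambda>v::real. max (max (8 * v) 1) (SOME r. 0 \<le> r \<and> 2 * \<omega> (8 * v) \<le> \<rho> (3 * r)))"
  define a where "a = rec_nat (0::real) (\<lambda>_ v. g v)"
  have a0: "a 0 = 0" by (simp add: a_def)
  have aS: "a (Suc k) = g (a k)" for k by (simp add: a_def)
  have g1: "8 * v \<le> g v" "1 \<le> g v" for v by (auto simp: g_def)
  have g2: "2 * \<omega> (8 * v) \<le> \<rho> (3 * g v)" for v
  proof -
    define r where "r = (SOME r. 0 \<le> r \<and> 2 * \<omega> (8 * v) \<le> \<rho> (3 * r))"
    have r: "0 \<le> r \<and> 2 * \<omega> (8 * v) \<le> \<rho> (3 * r)"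
      unfolding r_def by (rule someI_ex[OF gex])
    have "r \<le> g v" by (simp add: g_def r_def[symmetric])
    hence "\<rho> (3 * r) \<le> \<rho> (3 * g v)" using r by (intro rmono) auto
    thus ?thesis using r by linarith
  qed
  have a_nonneg: "0 \<le> a k" for k
    by (cases k) (auto simp: a0 aS intro: order_trans[OF _ g1(2)])
  have a_step: "8 * a k \<le> a (Suc k)" "1 \<le> a (Suc k)" "2 * \<omega> (8 * a k) \<le> \<rho> (3 * a (Suc k))" for k
    using g1 g2 by (auto simp: aS)
  have a_inc: "a k \<le> a (Suc k)" for k using a_step(1)[of k] a_nonneg[of k] by linarith
  have a_mono: "a i \<le> a j" if "i \<le> j" for i j
    using incseq_SucI[of a, OF a_inc] that by (simp add: incseq_def)
  have a_ge: "real (Suc k) \<le> a (Suc k)" for k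
  proof (induction k)
    case 0 then show ?case using a_step(2)[of 0] by simp
  next
    case (Suc k) then show ?case using a_step(1)[of "Suc k"] by simp
  qed
  define cc where "cc k = 8 * a (Suc k)" for k
  define T where "T k x = Tm (a k) (cc k) x" for k and x :: 'a
  define N where "N k = nat \<lceil>cc k\<rceil> + 1" for k
  have cc_nonneg: "0 \<le> cc k" for k using a_nonneg by (simp add: cc_def)
  have a_le_cc: "a k \<le> cc k" for k using a_inc[of k] a_nonneg[of "Suc k"] by (simp add: cc_def)
  have N1: "1 \<le> N k" for k by (simp add: N_def)
  have normT: "norm (T k x) = fk (a k) (cc k) (norm x)" for k x
    by (simp add: T_def norm_Tm a_nonneg)
  have normT_le_cc: "norm (T k x) \<le> cc k" for k x
    unfolding normT fk_def using cc_nonneg[of k] norm_ge_zero[of x] a_nonneg[of k] by linarith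
  have normT_le: "norm (T k x) \<le> real (N k)" for k x
  proof -
    have "cc k \<le> real (nat \<lceil>cc k\<rceil>)" by linarith
    thus ?thesis using normT_le_cc[of k x] by (simp add: N_def)
  qed
  have supp: "a k < norm x \<and> norm x < cc k" if "T k x \<noteq> 0" for k x
  proof -
    have "norm (T k x) \<noteq> 0" using that by simp
    hence "fk (a k) (cc k) (norm x) \<noteq> 0" by (simp add: normT)
    thus ?thesis by (auto simp: fk_def max_def min_def split: if_splits)
  qed
  have disj: "cc i \<le> a j" if "i < j" "i mod 2 = j mod 2" for i j
  proof -
    have "Suc (Suc i) \<le> j" using that by presburger
    hence "a (Suc (Suc i)) \<le> a j" by (rule a_mono)
    thus ?thesis using a_step(1)[of "Suc i"] by (simp add: cc_def)
  qed
  have uniq: "i = j" if "i mod 2 = j mod 2" "T i x \<noteq> 0" "T j x \<noteq> 0" for i j x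
  proof (rule ccontr)
    assume "i \<noteq> j"
    then consider "i < j" | "j < i" by linarith
    then show False
    proof cases
      case 1 then show False using disj[OF 1 that(1)] supp[OF that(2)] supp[OF that(3)] by linarith
    next
      case 2 then show False using disj[OF 2 that(1)[symmetric]] supp[OF that(2)] supp[OF that(3)] by linarith
    qed
  qed
  define \<kappa> where "\<kappa> c x = (if \<exists>k. k mod 2 = c \<and> T k x \<noteq> 0 then (LEAST k. k mod 2 = c \<and> T k x \<noteq> 0) else c)"
    for c :: nat and x
  have kappa_mod: "\<kappa> c x mod 2 = c" if "c < 2" for c x
  proof (cases "\<exists>k. k mod 2 = c \<and> T k x \<noteq> 0")
    case True
    then show ?thesis unfolding \<kappa>_def using LeastI_ex[OF True] by simp
  next
    case False then show ?thesis using that unfolding \<kappa>_def by (simp only: if_False) simp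
  qed
  have kappa_other: "T i x = 0" if "c < 2" "i mod 2 = c" "i \<noteq> \<kappa> c x" for c i x
  proof (rule ccontr)
    assume ne: "T i x \<noteq> 0"
    hence ex: "\<exists>k. k mod 2 = c \<and> T k x \<noteq> 0" using that by blast
    hence "\<kappa> c x = (LEAST k. k mod 2 = c \<and> T k x \<noteq> 0)" by (simp add: \<kappa>_def)
    moreover have "(LEAST k. k mod 2 = c \<and> T k x \<noteq> 0) mod 2 = c \<and> T (LEAST k. k mod 2 = c \<and> T k x \<noteq> 0) x \<noteq> 0"
      by (rule LeastI_ex[OF ex])
    ultimately have "\<kappa> c x mod 2 = c" "T (\<kappa> c x) x \<noteq> 0" by auto
    hence "i = \<kappa> c x" using uniq[of i "\<kappa> c x" x] ne that(2) by simp
    thus False using that(3) by simp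
  qed
  have hT0: "h (N k) (T k x) = m0" if "T k x = 0" for k x
    using h0 N1[of k] that by simp
  have hb: "\<rho> (norm (u - v)) \<le> dist (h (N k) u) (h (N k) v) \<and> dist (h (N k) u) (h (N k) v) \<le> \<omega> (norm (u - v))"
    if "norm u \<le> real (N k)" "norm v \<le> real (N k)" for k u v
    using hbounds N1[of k] that by blast
  have om3: "\<omega> (norm (T k x - T k y)) \<le> \<omega> (3 * norm (x - y))" for k x y
    using Tm_lip[OF a_nonneg[of k], of "cc k" x y] by (intro omono) (auto simp: T_def)
  define Fc where "Fc c x = h (N (\<kappa> c x)) (T (\<kappa> c x) x)" for c x
  define F where "F x = (Fc 0 x, Fc 1 x, m0, m0)" for x
  have upper: "dist (Fc c x) (Fc c y) \<le> 2 * \<omega> (3 * norm (x - y))" if c2: "c < 2" for c x y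
  proof -
    define k where "k = \<kappa> c x"
    define j where "j = \<kappa> c y"
    have om_nn: "0 \<le> \<omega> (3 * norm (x - y))" using omega_nonneg by simp
    show ?thesis
    proof (cases "k = j")
      case True
      have ky: "\<kappa> c y = k" using True by (simp add: j_def)
      have "dist (Fc c x) (Fc c y) = dist (h (N k) (T k x)) (h (N k) (T k y))"
        unfolding Fc_def ky k_def[symmetric] ..
      also have "\<dots> \<le> \<omega> (norm (T k x - T k y))" using hb[OF normT_le normT_le] by blast
      also have "\<dots> \<le> \<omega> (3 * norm (x - y))" by (rule om3)
      finally show ?thesis using om_nn by linarith
    next
      case False
      have Tky: "T k y = 0" using kappa_other[OF c2, of k y] kappa_mod[OF c2, of x] False
        by (simp add: k_def j_def)
      have Tjx: "T j x = 0" using kappa_other[OF c2, of j x] kappa_mod[OF c2, of y] False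
        by (simp add: k_def j_def)
      have "dist (Fc c x) (Fc c y) = dist (h (N k) (T k x)) (h (N j) (T j y))"
        by (simp add: Fc_def k_def j_def)
      also have "\<dots> \<le> dist (h (N k) (T k x)) m0 + dist m0 (h (N j) (T j y))"
        by (rule dist_triangle)
      also have "dist (h (N k) (T k x)) m0 = dist (h (N k) (T k x)) (h (N k) (T k y))"
        using hT0[OF Tky] by simp
      also have "\<dots> \<le> \<omega> (3 * norm (x - y))"
        using hb[OF normT_le normT_le, of k x y] om3[of k x y] by linarith
      also have "dist m0 (h (N j) (T j y)) = dist (h (N j) (T j x)) (h (N j) (T j y))"
        using hT0[OF Tjx] by simp
      also have "\<dots> \<le> \<omega> (3 * norm (x - y))"
        using hb[OF normT_le normT_le, of j x y] om3[of j x y] by linarith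
      finally show ?thesis by linarith
    qed
  qed
  have lower: "\<exists>c<2. (1/2) * \<rho> (norm (x - y) / 2) \<le> dist (Fc c x) (Fc c y)"
    if le: "norm y \<le> norm x" and ne: "x \<noteq> y" for x y
  proof -
    define R where "R = norm x"
    define s where "s = norm y"
    define t where "t = norm (x - y)"
    have t0: "0 \<le> t" by (simp add: t_def)
    have Rpos: "0 < R"
    proof (rule ccontr)
      assume "\<not> 0 < R"
      hence "norm x = 0" "norm y = 0" using le norm_ge_zero[of y] unfolding R_def by linarith+
      thus False using ne by simp
    qed
    have ts: "t \<le> R + s" unfolding t_def R_def s_def by (rule norm_triangle_ineq4)
    have exk: "\<exists>k. R < 4 * a (Suc k)"
    proof -
      have "R < real (Suc (nat \<lceil>R\<rceil>))" by linarith
      also have "\<dots> \<le> a (Suc (nat \<lceil>R\<rceil>))" by (rule a_ge)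
      finally have "R < a (Suc (nat \<lceil>R\<rceil>))" .
      moreover have "0 \<le> a (Suc (nat \<lceil>R\<rceil>))" by (rule a_nonneg)
      ultimately show ?thesis by (intro exI[of _ "nat \<lceil>R\<rceil>"]) linarith
    qed
    define k where "k = (LEAST k. R < 4 * a (Suc k))"
    have Rk2: "R < 4 * a (Suc k)" unfolding k_def by (rule LeastI_ex[OF exk])
    have Rk1: "4 * a k \<le> R"
    proof (cases k)
      case 0 then show ?thesis using a0 Rpos by simp
    next
      case (Suc k')
      have "\<not> R < 4 * a (Suc k')" using Suc unfolding k_def
        by (metis Suc k_def lessI not_less_Least)
      then show ?thesis using Suc by simp
    qed
    have Rm: "R \<le> (a k + cc k) / 2" using Rk2 a_nonneg[of k] by (simp add: cc_def)
    have Rcc: "R < cc k" using Rk2 a_nonneg[of "Suc k"] by (simp add: cc_def)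
    define c where "c = k mod 2"
    have c2: "c < 2" by (simp add: c_def)
    have lowT: "t / 2 \<le> norm (T k x - T k y)"
      unfolding t_def T_def
      by (rule Tm_lower[OF a_nonneg]) (use Rk1 Rm le in \<open>simp_all add: R_def\<close>)
    have fkx: "fk (a k) (cc k) R = R - a k"
      using Rk1 Rm a_nonneg[of k] by (simp add: fk_def)
    have nTx: "norm (T k x) = R - a k" using normT[of k x] fkx by (simp add: R_def)
    have Rak: "a k < R" using Rk1 Rpos a_nonneg[of k] by linarith
    have Tkx: "T k x \<noteq> 0" using nTx Rak by auto
    have kx: "\<kappa> c x = k" using kappa_other[OF c2, of k x] Tkx unfolding c_def by metis
    define j where "j = \<kappa> c y"
    have jmod: "j mod 2 = c" using kappa_mod[OF c2] by (simp add: j_def)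
    have rt: "0 \<le> \<rho> (t/2)" using rho_nonneg t0 by simp
    show ?thesis
    proof (cases "j = k \<or> T j y = 0")
      case True
      have Fy: "Fc c y = h (N k) (T k y)"
      proof (cases "j = k")
        case True then show ?thesis by (simp add: Fc_def j_def[symmetric])
      next
        case False
        with \<open>j = k \<or> T j y = 0\<close> have Tjy: "T j y = 0" by simp
        have Tky: "T k y = 0" using kappa_other[OF c2, of k y] False by (simp add: c_def j_def)
        show ?thesis using hT0[OF Tjy] hT0[OF Tky] by (simp add: Fc_def j_def[symmetric])
      qed
      have "\<rho> (t/2) \<le> \<rho> (norm (T k x - T k y))" using lowT t0 by (intro rmono) auto
      also have "\<dots> \<le> dist (h (N k) (T k x)) (h (N k) (T k y))"
        using hb[OF normT_le normT_le] by blast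
      also have "\<dots> = dist (Fc c x) (Fc c y)" using Fy kx by (simp add: Fc_def)
      finally show ?thesis using c2 rt by (intro exI[of _ c]) (simp add: t_def)
    next
      case False
      hence jk: "j \<noteq> k" and Tjy: "T j y \<noteq> 0" by auto
      have Tky: "T k y = 0" using kappa_other[OF c2, of k y] jk by (simp add: c_def j_def)
      have sj: "a j < s \<and> s < cc j" using supp[OF Tjy] by (simp add: s_def)
      have "j < k"
      proof (rule ccontr)
        assume "\<not> j < k"
        hence "k < j" using jk by simp
        hence "cc k \<le> a j" using disj jmod by (simp add: c_def)
        thus False using sj Rcc le by (simp add: s_def R_def)
      qed
      hence kj2: "Suc (Suc j) \<le> k" using jmod by (simp add: c_def) presburger
      then obtain k' where k': "k = Suc k'" and jk': "Suc j \<le> k'" by (cases k) auto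
      have ccj_ak: "cc j \<le> a k" using disj[OF \<open>j < k\<close>] jmod by (simp add: c_def)
      have ccj: "cc j \<le> 8 * a k'" using a_mono[OF jk'] by (simp add: cc_def)
      have step: "2 * \<omega> (8 * a k') \<le> \<rho> (3 * a k)" using a_step(3)[of k'] by (simp add: k')
      have "\<omega> (norm (T j y)) \<le> \<omega> (8 * a k')"
        using normT_le_cc[of j y] ccj by (intro omono) auto
      have d1: "dist (h (N j) (T j y)) m0 \<le> \<omega> (norm (T j y))"
        using hb[of "T j y" j 0] normT_le[of j y] hT0[of j 0] by (simp add: T_def)
      have d2: "\<rho> (R - a k) \<le> dist (h (N k) (T k x)) m0"
        using hb[of "T k x" k 0] normT_le[of k x] hT0[of k 0] nTx by (simp add: T_def)
      have r3: "\<rho> (3 * a k) \<le> \<rho> (R - a k)" using Rk1 a_nonneg[of k] by (intro rmono) auto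
      have tR: "t/2 \<le> R - a k" using ts sj ccj_ak Rk1 a_nonneg[of k] by linarith
      have r4: "\<rho> (t/2) \<le> \<rho> (R - a k)" using tR t0 by (intro rmono) auto
      have tri: "dist (h (N k) (T k x)) m0 \<le> dist (h (N k) (T k x)) (h (N j) (T j y)) + dist (h (N j) (T j y)) m0"
        by (rule dist_triangle)
      have "dist (Fc c x) (Fc c y) = dist (h (N k) (T k x)) (h (N j) (T j y))"
        using kx by (simp add: Fc_def j_def)
      hence "(1/2) * \<rho> (t/2) \<le> dist (Fc c x) (Fc c y)"
        using tri d1 d2 r3 r4 step \<open>\<omega> (norm (T j y)) \<le> \<omega> (8 * a k')\<close> by linarith
      then show ?thesis using c2 by (intro exI[of _ c]) (simp add: t_def)
    qed
  qed
  show ?thesis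
  proof (rule exI[of _ F], intro allI conjI)
    fix x y :: 'a
    have d4: "dist4 (F x) (F y) = max (max (dist (Fc 0 x) (Fc 0 y)) (dist (Fc 1 x) (Fc 1 y))) 0"
      by (simp add: dist4_def F_def)
    have om_nn: "0 \<le> \<omega> (3 * norm (x - y))" using omega_nonneg by simp
    show "dist4 (F x) (F y) \<le> 8 * \<omega> (3 * norm (x - y))"
      using upper[of 0 x y] upper[of 1 x y] om_nn unfolding d4 by simp
    show "(1/2) * \<rho> (norm (x - y) / 2) \<le> dist4 (F x) (F y)"
    proof (cases "x = y")
      case True then show ?thesis using rho0 unfolding d4 by simp
    next
      case False
      have "\<exists>c<2. (1/2) * \<rho> (norm (x - y) / 2) \<le> dist (Fc c x) (Fc c y)"
      proof (cases "norm y \<le> norm x")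
        case True then show ?thesis using lower False by blast
      next
        case nle: False
        then obtain c where "c < 2" "(1/2) * \<rho> (norm (y - x) / 2) \<le> dist (Fc c y) (Fc c x)"
          using lower[of x y] False by auto
        then show ?thesis by (auto simp: norm_minus_commute dist_commute)
      qed
      then obtain c where c: "c < 2" "(1/2) * \<rho> (norm (x - y) / 2) \<le> dist (Fc c x) (Fc c y)" by blast
      have "c = 0 \<or> c = 1" using c(1) by linarith
      then show ?thesis using c(2) unfolding d4 by auto
    qed
  qed
qed

end
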